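(* Let $f:X\to Y$ be a morphism in $\mathcal{C}^J(\mathcal{P}(\Lambda))$, $X=(X^n,d^n)$, $Y=(Y^n,\partial^n)$, and let $i\in\mathbb{Z}$. Suppose $f$ is sirreducible with irreducible component $f^i:X^i\to Y^i$ and is in the following standard form: for $n<i$, $X^n=Y^n\oplus X'^n$ and $f^n=(1\ \ 0)$; for $n\le i-2$, $d^n=\begin{pmatrix}\partial^n&0\\ b^n&e^n\end{pmatrix}$ with $b^n:Y^n\to X'^{n+1}$, $e^n:X'^n\to X'^{n+1}$; $d^{i-1}=(c^{i-1}\ \ e^{i-1}):Y^{i-1}\oplus X'^{i-1}\to X^i$; for $n>i$, $Y^n=X^n\oplus Y'^n$ and $f^n=\begin{pmatrix}1\\0\end{pmatrix}$; $\partial^i=\begin{pmatrix}\ell^i\\ e^i\end{pmatrix}:Y^i\to X^{i+1}\oplus Y'^{i+1}$; and for $n\ge i+1$, $\partial^n=\begin{pmatrix}d^n&a^n\\0&e^n\end{pmatrix}$ with $a^n:Y'^n\to X^{n+1}$, $e^n:Y'^n\to Y'^{n+1}$. Then the standard triangle $X\xrightarrow{f}Y\to C_f\to X[1]$ is isomorphic, in $\mathcal{K}^J(\mathcal{P}(\Lambda))$, to the triangle $X\xrightarrow{f}Y\xrightarrow{g}Z\xrightarrow{w}X[1]$, where $Z^n=X'^{n+1}$ for $n<i-1$, $Z^{i-1}=X^i$, $Z^i=Y^i$, $Z^n=Y'^n$ for $n>i$, with differential $d_Z^n=-e^{n+1}$ for $n\le i-2$, $d_Z^{i-1}=f^i$,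 $d_Z^n=e^n$ for $n\ge i$; $g^n=b^n$ for $n<i-1$, $g^{i-1}=c^{i-1}$, $g^i=1$, $g^n=(0\ \ 1):X^n\oplus Y'^n\to Y'^n$ for $n>i$; $w^n=\begin{pmatrix}0\\1\end{pmatrix}:X'^{n+1}\to Y^{n+1}\oplus X'^{n+1}$ for $n<i-1$, $w^{i-1}=1_{X^i}$, $w^i=-\ell^i$, $w^n=-a^n$ for $n>i$.
   Context: $\Lambda$ is a finite-dimensional non-semisimple algebra over a field $k$, $\mathcal{P}(\Lambda)$ the category of finitely generated projective right $\Lambda$-modules. Complexes are cochain complexes with $d^n:X^n\to X^{n+1}$; for an interval $J\subseteq\mathbb{Z}$, $\mathcal{C}^J(\mathcal{P}(\Lambda))$ denotes complexes of finitely generated projective modules vanishing outside $J$ and $\mathcal{K}^J(\mathcal{P}(\Lambda))$ its homotopy category, triangulated with shift $X[1]^n=X^{n+1}$, $d_{X[1]}=-d_X$. The mapping cone of $f:X\to Y$ has $C_f^n=X^{n+1}\oplus Y^n$ with differential $\begin{pmatrix}-d_X^{n+1}&0\\ f^{n+1}&d_Y^n\end{pmatrix}$, and the standard triangle is $X\xrightarrow{f}Y\to C_f\to X[1]$ with the canonical inclusion and projection. A morphism of complexes $f$ is sirreducible if there is exactly one index $i$ with $f^i$ irreducible in $\mathcal{P}(\Lambda)$, $f^n$ a split epimorphism for $n<i$ and a split monomorphism for $n>i$. *)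

theory Defs
  imports Main "Jordan_Normal_Form.Matrix"
begin

text \<open>Lambda is modelled by a type 'a of class ring_1, together with a scalar
multiplication by a field 'k making it a finite-dimensional k-algebra.\<close>

definition fd_algebra :: "('k::field \<Rightarrow> 'a::ring_1 \<Rightarrow> 'a) \<Rightarrow> bool" where
  "fd_algebra scale \<longleftrightarrow>
     (\<exists>B. finite_dimensional_vector_space scale B) \<and>
     (\<forall>c x y. scale c (x * y) = scale c x * y \<and> scale c (x * y) = x * scale c y)"

definition right_ideal :: "'a::ring_1 set \<Rightarrow> bool" where
  "right_ideal I \<longleftrightarrow> 0 \<in> I \<and> (\<forall>x\<in>I. \<forall>y\<in>I. x + y \<in> I) \<and> (\<forall>x\<in>I. - x \<in> I)
      \<and> (\<forall>x\<in>I. \<forall>r. x * r \<in> I)"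

text \<open>Lambda is semisimple iff the regular right module is semisimple, i.e. every
right ideal (submodule of Lambda_Lambda) is a direct summand.\<close>
definition semisimple_ring :: "'a::ring_1 itself \<Rightarrow> bool" where
  "semisimple_ring _ \<longleftrightarrow>
     (\<forall>I::'a set. right_ideal I \<longrightarrow> (\<exists>I'. right_ideal I' \<and> I \<inter> I' = {0} \<and>
        (\<forall>x. \<exists>a\<in>I. \<exists>b\<in>I'. x = a + b)))"

text \<open>A finitely generated projective right Lambda-module is represented as
e Lambda^m (column vectors, Lambda acting on the right) for an idempotent m x m
matrix e; a module homomorphism e Lambda^m \<rightarrow> e' Lambda^m' is left multiplication
by a matrix phi with e' phi = phi = phi e.  The identity of e is e itself.\<close>

definition pobj :: "'a::ring_1 mat \<Rightarrow> bool" where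
  "pobj e \<longleftrightarrow> e \<in> carrier_mat (dim_row e) (dim_row e) \<and> e * e = e"

definition phom :: "'a::ring_1 mat \<Rightarrow> 'a mat \<Rightarrow> 'a mat \<Rightarrow> bool" where
  "phom A B \<phi> \<longleftrightarrow> pobj A \<and> pobj B \<and> \<phi> \<in> carrier_mat (dim_row B) (dim_row A)
      \<and> B * \<phi> = \<phi> \<and> \<phi> * A = \<phi>"

definition split_mono :: "'a::ring_1 mat \<Rightarrow> 'a mat \<Rightarrow> 'a mat \<Rightarrow> bool" where
  "split_mono A B \<phi> \<longleftrightarrow> phom A B \<phi> \<and> (\<exists>r. phom B A r \<and> r * \<phi> = A)"

definition split_epi :: "'a::ring_1 mat \<Rightarrow> 'a mat \<Rightarrow> 'a mat \<Rightarrow> bool" where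
  "split_epi A B \<phi> \<longleftrightarrow> phom A B \<phi> \<and> (\<exists>s. phom B A s \<and> \<phi> * s = B)"

definition irreducible_mor :: "'a::ring_1 mat \<Rightarrow> 'a mat \<Rightarrow> 'a mat \<Rightarrow> bool" where
  "irreducible_mor A B \<phi> \<longleftrightarrow> phom A B \<phi> \<and> \<not> split_mono A B \<phi> \<and> \<not> split_epi A B \<phi> \<and>
     (\<forall>C h g. pobj C \<longrightarrow> phom A C h \<longrightarrow> phom C B g \<longrightarrow> \<phi> = g * h \<longrightarrow>
        split_mono A C h \<or> split_epi C B g)"

definition dsum :: "'a::ring_1 mat \<Rightarrow> 'a mat \<Rightarrow> 'a mat" where
  "dsum A B = four_block_mat A (0\<^sub>m (dim_row A) (dim_col B)) (0\<^sub>m (dim_row B) (dim_col A)) B"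

definition rowb :: "'a::ring_1 mat \<Rightarrow> 'a mat \<Rightarrow> 'a mat" where
  "rowb P Q = four_block_mat P Q (0\<^sub>m 0 (dim_col P)) (0\<^sub>m 0 (dim_col Q))"

definition colb :: "'a::ring_1 mat \<Rightarrow> 'a mat \<Rightarrow> 'a mat" where
  "colb P Q = four_block_mat P (0\<^sub>m (dim_row P) 0) Q (0\<^sub>m (dim_row Q) 0)"

definition blk :: "'a::ring_1 mat \<Rightarrow> 'a mat \<Rightarrow> 'a mat \<Rightarrow> 'a mat \<Rightarrow> 'a mat" where
  "blk A B C D = four_block_mat A B C D"

type_synonym 'a cplx = "(int \<Rightarrow> 'a mat) \<times> (int \<Rightarrow> 'a mat)"

definition is_complex :: "'a::ring_1 cplx \<Rightarrow> bool" where
  "is_complex X \<longleftrightarrow> (\<forall>n. phom (fst X n) (fst X (n+1)) (snd X n)) \<and>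
     (\<forall>n. snd X (n+1) * snd X n = 0\<^sub>m (dim_row (fst X (n+2))) (dim_row (fst X n)))"

definition is_interval :: "int set \<Rightarrow> bool" where
  "is_interval J \<longleftrightarrow> (\<forall>a b c. a \<in> J \<longrightarrow> c \<in> J \<longrightarrow> a \<le> b \<longrightarrow> b \<le> c \<longrightarrow> b \<in> J)"

definition in_CJ :: "int set \<Rightarrow> 'a::ring_1 cplx \<Rightarrow> bool" where
  "in_CJ J X \<longleftrightarrow> is_complex X \<and>
     (\<forall>n. n \<notin> J \<longrightarrow> fst X n = 0\<^sub>m (dim_row (fst X n)) (dim_row (fst X n)))"

definition chain_map :: "'a::ring_1 cplx \<Rightarrow> 'a cplx \<Rightarrow> (int \<Rightarrow> 'a mat) \<Rightarrow> bool" where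
  "chain_map X Y f \<longleftrightarrow> (\<forall>n. phom (fst X n) (fst Y n) (f n)) \<and>
     (\<forall>n. snd Y n * f n = f (n+1) * snd X n)"

definition homotopic :: "'a::ring_1 cplx \<Rightarrow> 'a cplx \<Rightarrow> (int \<Rightarrow> 'a mat) \<Rightarrow> (int \<Rightarrow> 'a mat) \<Rightarrow> bool" where
  "homotopic X Y f g \<longleftrightarrow> (\<exists>h. (\<forall>n. phom (fst X n) (fst Y (n-1)) (h n)) \<and>
     (\<forall>n. f n - g n = snd Y (n-1) * h n + h (n+1) * snd X n))"

definition comp_map :: "(int \<Rightarrow> 'a::ring_1 mat) \<Rightarrow> (int \<Rightarrow> 'a mat) \<Rightarrow> int \<Rightarrow> 'a mat" where
  "comp_map g f = (\<lambda>n. g n * f n)"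

definition id_map :: "'a::ring_1 cplx \<Rightarrow> int \<Rightarrow> 'a mat" where
  "id_map X = fst X"

definition K_iso :: "'a::ring_1 cplx \<Rightarrow> 'a cplx \<Rightarrow> (int \<Rightarrow> 'a mat) \<Rightarrow> bool" where
  "K_iso X Y f \<longleftrightarrow> chain_map X Y f \<and> (\<exists>g. chain_map Y X g \<and>
     homotopic X X (comp_map g f) (id_map X) \<and> homotopic Y Y (comp_map f g) (id_map Y))"

definition shift :: "'a::ring_1 cplx \<Rightarrow> 'a cplx" where
  "shift X = (\<lambda>n. fst X (n+1), \<lambda>n. - snd X (n+1))"

definition shift_map :: "(int \<Rightarrow> 'a::ring_1 mat) \<Rightarrow> int \<Rightarrow> 'a mat" where
  "shift_map f = (\<lambda>n. f (n+1))"

definition cone :: "'a::ring_1 cplx \<Rightarrow> 'a cplx \<Rightarrow> (int \<Rightarrow> 'a mat) \<Rightarrow> 'a cplx" where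
  "cone X Y f = (\<lambda>n. dsum (fst X (n+1)) (fst Y n),
     \<lambda>n. blk (- snd X (n+1)) (0\<^sub>m (dim_row (fst X (n+2))) (dim_row (fst Y n)))
             (f (n+1)) (snd Y n))"

definition cone_in :: "'a::ring_1 cplx \<Rightarrow> 'a cplx \<Rightarrow> int \<Rightarrow> 'a mat" where
  "cone_in X Y = (\<lambda>n. colb (0\<^sub>m (dim_row (fst X (n+1))) (dim_row (fst Y n))) (fst Y n))"

definition cone_pr :: "'a::ring_1 cplx \<Rightarrow> 'a cplx \<Rightarrow> int \<Rightarrow> 'a mat" where
  "cone_pr X Y = (\<lambda>n. rowb (fst X (n+1)) (0\<^sub>m (dim_row (fst X (n+1))) (dim_row (fst Y n))))"

definition tri_iso ::
  "'a::ring_1 cplx \<Rightarrow> 'a cplx \<Rightarrow> 'a cplx \<Rightarrow> (int \<Rightarrow> 'a mat) \<Rightarrow> (int \<Rightarrow> 'a mat) \<Rightarrow> (int \<Rightarrow> 'a mat) \<Rightarrow>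
   'a cplx \<Rightarrow> 'a cplx \<Rightarrow> 'a cplx \<Rightarrow> (int \<Rightarrow> 'a mat) \<Rightarrow> (int \<Rightarrow> 'a mat) \<Rightarrow> (int \<Rightarrow> 'a mat) \<Rightarrow> bool"
  where
  "tri_iso X Y Z u v w X' Y' Z' u' v' w' \<longleftrightarrow>
     (\<exists>\<alpha> \<beta> \<gamma>. K_iso X X' \<alpha> \<and> K_iso Y Y' \<beta> \<and> K_iso Z Z' \<gamma> \<and>
        homotopic X Y' (comp_map \<beta> u) (comp_map u' \<alpha>) \<and>
        homotopic Y Z' (comp_map \<gamma> v) (comp_map v' \<beta>) \<and>
        homotopic Z (shift X') (comp_map (shift_map \<alpha>) w) (comp_map w' \<gamma>))"

definition sirreducible :: "'a::ring_1 cplx \<Rightarrow> 'a cplx \<Rightarrow> (int \<Rightarrow> 'a mat) \<Rightarrow> bool" where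
  "sirreducible X Y f \<longleftrightarrow> (\<exists>i. (\<forall>j. irreducible_mor (fst X j) (fst Y j) (f j) \<longleftrightarrow> j = i) \<and>
     (\<forall>n<i. split_epi (fst X n) (fst Y n) (f n)) \<and>
     (\<forall>n>i. split_mono (fst X n) (fst Y n) (f n)))"

end

theory Submission
  imports Defs
begin


lemma fb_eq_iff:
  fixes A B C D A' B' C' D' :: "'a mat"
  assumes "dim_row A' = dim_row A" "dim_col A' = dim_col A" "dim_row D' = dim_row D" "dim_col D' = dim_col D"
    "dim_row B = dim_row A" "dim_col B = dim_col D" "dim_row C = dim_row D" "dim_col C = dim_col A"
    "dim_row B' = dim_row A" "dim_col B' = dim_col D" "dim_row C' = dim_row D" "dim_col C' = dim_col A"
  shows "(four_block_mat A B C D = four_block_mat A' B' C' D') = (A = A' \<and> B = B' \<and> C = C' \<and> D = D')"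
proof
  assume e: "four_block_mat A B C D = four_block_mat A' B' C' D'"
  let ?F = "four_block_mat A B C D" and ?G = "four_block_mat A' B' C' D'"
  have *: "\<And>p q. p < dim_row A + dim_row D \<Longrightarrow> q < dim_col A + dim_col D \<Longrightarrow> ?F $$ (p,q) = ?G $$ (p,q)"
    using e by simp
  have "A = A'"
  proof (rule eq_matI)
    fix p q assume "p < dim_row A'" "q < dim_col A'"
    then show "A $$ (p,q) = A' $$ (p,q)" using *[of p q] assms by simp
  qed (use assms in auto)
  moreover have "B = B'"
  proof (rule eq_matI)
    fix p q assume "p < dim_row B'" "q < dim_col B'"
    then show "B $$ (p,q) = B' $$ (p,q)" using *[of p "q + dim_col A"] assms by simp
  qed (use assms in auto)
  moreover have "C = C'"
  proof (rule eq_matI)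
    fix p q assume "p < dim_row C'" "q < dim_col C'"
    then show "C $$ (p,q) = C' $$ (p,q)" using *[of "p + dim_row A" q] assms by simp
  qed (use assms in auto)
  moreover have "D = D'"
  proof (rule eq_matI)
    fix p q assume "p < dim_row D'" "q < dim_col D'"
    then show "D $$ (p,q) = D' $$ (p,q)" using *[of "p + dim_row A" "q + dim_col A"] assms by simp
  qed (use assms in auto)
  ultimately show "A = A' \<and> B = B' \<and> C = C' \<and> D = D'" by simp
qed auto

lemma fb_mult:
  fixes A1 B1 C1 D1 A2 B2 C2 D2 :: "'a::semiring_0 mat"
  assumes "dim_row B1 = dim_row A1" "dim_row D1 = dim_row C1" "dim_col C1 = dim_col A1" "dim_col D1 = dim_col B1"
    "dim_row B2 = dim_row A2" "dim_row D2 = dim_row C2" "dim_col C2 = dim_col A2" "dim_col D2 = dim_col B2"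
    "dim_row A2 = dim_col A1" "dim_row C2 = dim_col B1"
  shows "four_block_mat A1 B1 C1 D1 * four_block_mat A2 B2 C2 D2 =
     four_block_mat (A1 * A2 + B1 * C2) (A1 * B2 + B1 * D2) (C1 * A2 + D1 * C2) (C1 * B2 + D1 * D2)"
  apply (rule mult_four_block_mat[of A1 "dim_row A1" "dim_col A1" B1 "dim_col B1" C1 "dim_row C1" D1
        A2 "dim_col A2" B2 "dim_col B2" C2 D2])
  unfolding carrier_mat_def mem_Collect_eq using assms by (simp_all only: prod.inject)

lemma fb_uminus: "dim_row B = dim_row A \<Longrightarrow> dim_col B = dim_col D \<Longrightarrow> dim_row C = dim_row D \<Longrightarrow> dim_col C = dim_col A \<Longrightarrow>
  - four_block_mat A B C D = four_block_mat (- A) (- B) (- C) (- (D::'a::group_add mat))"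
  by (rule eq_matI) auto

lemma fb_add:
  fixes A B C D A' B' C' D' :: "'a::monoid_add mat"
  assumes "dim_row A' = dim_row A" "dim_col A' = dim_col A" "dim_row D' = dim_row D" "dim_col D' = dim_col D"
    "dim_row B = dim_row A" "dim_col B = dim_col D" "dim_row C = dim_row D" "dim_col C = dim_col A"
    "dim_row B' = dim_row A" "dim_col B' = dim_col D" "dim_row C' = dim_row D" "dim_col C' = dim_col A"
  shows "four_block_mat A B C D + four_block_mat A' B' C' D' = four_block_mat (A + A') (B + B') (C + C') (D + D')"
  by (rule eq_matI) (use assms in auto)

lemma zero_mat_eq_iff: "(0\<^sub>m a b = 0\<^sub>m c d) = (a = c \<and> b = d)"
  by (metis index_zero_mat(2,3))

lemma add_zero_dim_l: "dim_row A = r \<Longrightarrow> dim_col A = c \<Longrightarrow> 0\<^sub>m r c + (A::'a::monoid_add mat) = A"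
  by (rule eq_matI) auto
lemma add_zero_dim_r: "dim_row A = r \<Longrightarrow> dim_col A = c \<Longrightarrow> (A::'a::monoid_add mat) + 0\<^sub>m r c = A"
  by (rule eq_matI) auto
lemma uminus_zero_m: "- 0\<^sub>m r c = (0\<^sub>m r c :: 'a::group_add mat)"
  by (rule eq_matI) auto
lemma neg_add_cancel_m: "B = A \<Longrightarrow> - A + (B::'a::group_add mat) = 0\<^sub>m (dim_row A) (dim_col A)"
  by (rule eq_matI) auto
lemma add_neg_cancel_m: "B = A \<Longrightarrow> A + - (B::'a::group_add mat) = 0\<^sub>m (dim_row A) (dim_col A)"
  by (rule eq_matI) auto
lemma zero_rows_eq: "dim_row A = 0 \<Longrightarrow> A = 0\<^sub>m 0 (dim_col A)"
  by (rule eq_matI) auto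

definition atomic :: "'a mat \<Rightarrow> bool" where "atomic M \<longleftrightarrow> True"

lemma fb_minus:
  fixes A B C D A' B' C' D' :: "'a::group_add mat"
  assumes "dim_row A' = dim_row A" "dim_col A' = dim_col A" "dim_row D' = dim_row D" "dim_col D' = dim_col D"
    "dim_row B = dim_row A" "dim_col B = dim_col D" "dim_row C = dim_row D" "dim_col C = dim_col A"
    "dim_row B' = dim_row A" "dim_col B' = dim_col D" "dim_row C' = dim_row D" "dim_col C' = dim_col A"
  shows "four_block_mat A B C D - four_block_mat A' B' C' D' = four_block_mat (A - A') (B - B') (C - C') (D - D')"
  by (rule eq_matI) (use assms in auto)

lemma minus_zero_dim_r: "dim_row A = r \<Longrightarrow> dim_col A = c \<Longrightarrow> (A::'a::group_add mat) - 0\<^sub>m r c = A"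
  by (rule eq_matI) auto
lemma minus_zero_dim_l: "dim_row A = r \<Longrightarrow> dim_col A = c \<Longrightarrow> 0\<^sub>m r c - (A::'a::group_add mat) = - A"
  by (rule eq_matI) auto
lemma minus_self_m: "(A::'a::group_add mat) - A = 0\<^sub>m (dim_row A) (dim_col A)"
  by (rule eq_matI) auto
lemma neg_add_self_m: "- (A::'a::group_add mat) + A = 0\<^sub>m (dim_row A) (dim_col A)"
  by (rule eq_matI) auto
lemma add_neg_self_m: "(A::'a::group_add mat) + - A = 0\<^sub>m (dim_row A) (dim_col A)"
  by (rule eq_matI) auto
lemma atomic_mult[simp]: "atomic A \<Longrightarrow> atomic B \<Longrightarrow> atomic (A * B)" by (simp add: atomic_def)
lemma atomic_uminus[simp]: "atomic A \<Longrightarrow> atomic (- A)" by (simp add: atomic_def)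
lemma atomic_add[simp]: "atomic A \<Longrightarrow> atomic B \<Longrightarrow> atomic (A + B)" by (simp add: atomic_def)

lemma fb_mult_left:
  fixes M A B C D :: "'a::semiring_0 mat"
  assumes "atomic M" "dim_row C = 0" "dim_row D = 0" "dim_row B = dim_row A" "dim_col M = dim_row A"
     "dim_col C = dim_col A" "dim_col D = dim_col B"
  shows "M * four_block_mat A B C D = four_block_mat (M * A) (M * B) (0\<^sub>m 0 (dim_col A)) (0\<^sub>m 0 (dim_col B))"
proof -
  have "M = four_block_mat M (0\<^sub>m (dim_row M) 0) (0\<^sub>m 0 (dim_col M)) (0\<^sub>m 0 0)"
    by (rule eq_matI) auto
  hence "M * four_block_mat A B C D = four_block_mat M (0\<^sub>m (dim_row M) 0) (0\<^sub>m 0 (dim_col M)) (0\<^sub>m 0 0) * four_block_mat A B C D" by simp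
  also have "\<dots> = four_block_mat (M * A + 0\<^sub>m (dim_row M) 0 * C) (M * B + 0\<^sub>m (dim_row M) 0 * D) 
     (0\<^sub>m 0 (dim_col M) * A + 0\<^sub>m 0 0 * C) (0\<^sub>m 0 (dim_col M) * B + 0\<^sub>m 0 0 * D)"
    by (rule fb_mult) (use assms in auto)
  also have "\<dots> = four_block_mat (M * A) (M * B) (0\<^sub>m 0 (dim_col A)) (0\<^sub>m 0 (dim_col B))"
    using assms by (simp add: add_zero_dim_r)
  finally show ?thesis .
qed

lemma fb_mult_right:
  fixes M A B C D :: "'a::semiring_0 mat"
  assumes "atomic M" "dim_col B = 0" "dim_col D = 0" "dim_row B = dim_row A" "dim_row M = dim_col A"
     "dim_col C = dim_col A" "dim_row D = dim_row C"
  shows "four_block_mat A B C D * M = four_block_mat (A * M) (0\<^sub>m (dim_row A) 0) (C * M) (0\<^sub>m (dim_row C) 0)"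
proof -
  have "M = four_block_mat M (0\<^sub>m (dim_row M) 0) (0\<^sub>m 0 (dim_col M)) (0\<^sub>m 0 0)"
    by (rule eq_matI) auto
  hence "four_block_mat A B C D * M = four_block_mat A B C D * four_block_mat M (0\<^sub>m (dim_row M) 0) (0\<^sub>m 0 (dim_col M)) (0\<^sub>m 0 0)" by simp
  also have "\<dots> = four_block_mat (A * M + B * 0\<^sub>m 0 (dim_col M)) (A * 0\<^sub>m (dim_row M) 0 + B * 0\<^sub>m 0 0)
     (C * M + D * 0\<^sub>m 0 (dim_col M)) (C * 0\<^sub>m (dim_row M) 0 + D * 0\<^sub>m 0 0)"
    by (rule fb_mult) (use assms in auto)
  also have "\<dots> = four_block_mat (A * M) (0\<^sub>m (dim_row A) 0) (C * M) (0\<^sub>m (dim_row C) 0)"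
    using assms by (simp add: add_zero_dim_r)
  finally show ?thesis .
qed

lemma fb_eq_zero_iff:
  fixes A B C D :: "'a::zero mat"
  assumes "dim_row B = dim_row A" "dim_col B = dim_col D" "dim_row C = dim_row D" "dim_col C = dim_col A"
  shows "(four_block_mat A B C D = 0\<^sub>m r c) = (dim_row A + dim_row D = r \<and> dim_col A + dim_col D = c \<and>
     A = 0\<^sub>m (dim_row A) (dim_col A) \<and> B = 0\<^sub>m (dim_row A) (dim_col D) \<and>
     C = 0\<^sub>m (dim_row D) (dim_col A) \<and> D = 0\<^sub>m (dim_row D) (dim_col D))"
proof
  assume e: "four_block_mat A B C D = 0\<^sub>m r c"
  hence rc: "dim_row A + dim_row D = r" "dim_col A + dim_col D = c"
    by (metis index_mat_four_block(2,3) index_zero_mat(2,3))+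
  have "0\<^sub>m r c = four_block_mat (0\<^sub>m (dim_row A) (dim_col A)) (0\<^sub>m (dim_row A) (dim_col D)) (0\<^sub>m (dim_row D) (dim_col A)) (0\<^sub>m (dim_row D) (dim_col D) :: 'a mat)"
    using rc by simp
  with e have "four_block_mat A B C D = four_block_mat (0\<^sub>m (dim_row A) (dim_col A)) (0\<^sub>m (dim_row A) (dim_col D)) (0\<^sub>m (dim_row D) (dim_col A)) (0\<^sub>m (dim_row D) (dim_col D) :: 'a mat)"
    by simp
  then show "dim_row A + dim_row D = r \<and> dim_col A + dim_col D = c \<and>
     A = 0\<^sub>m (dim_row A) (dim_col A) \<and> B = 0\<^sub>m (dim_row A) (dim_col D) \<and>
     C = 0\<^sub>m (dim_row D) (dim_col A) \<and> D = 0\<^sub>m (dim_row D) (dim_col D)"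
    using rc fb_eq_iff[of "0\<^sub>m (dim_row A) (dim_col A)" A "0\<^sub>m (dim_row D) (dim_col D)" D B C
       "0\<^sub>m (dim_row A) (dim_col D)" "0\<^sub>m (dim_row D) (dim_col A)"] assms by simp
next
  assume "dim_row A + dim_row D = r \<and> dim_col A + dim_col D = c \<and>
     A = 0\<^sub>m (dim_row A) (dim_col A) \<and> B = 0\<^sub>m (dim_row A) (dim_col D) \<and>
     C = 0\<^sub>m (dim_row D) (dim_col A) \<and> D = 0\<^sub>m (dim_row D) (dim_col D)"
  then show "four_block_mat A B C D = 0\<^sub>m r c" by (metis four_block_zero_mat)
qed

lemma zero_eq_fb_iff:
  fixes A B C D :: "'a::zero mat"
  assumes "dim_row B = dim_row A" "dim_col B = dim_col D" "dim_row C = dim_row D" "dim_col C = dim_col A"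
  shows "(0\<^sub>m r c = four_block_mat A B C D) = (dim_row A + dim_row D = r \<and> dim_col A + dim_col D = c \<and>
     A = 0\<^sub>m (dim_row A) (dim_col A) \<and> B = 0\<^sub>m (dim_row A) (dim_col D) \<and>
     C = 0\<^sub>m (dim_row D) (dim_col A) \<and> D = 0\<^sub>m (dim_row D) (dim_col D))"
  using fb_eq_zero_iff[OF assms, of r c] by metis

lemma plus_1_1[simp]: "(n::int) + 1 + 1 = n + 2" by simp

lemmas blk_simps = fb_mult fb_uminus fb_add zero_mat_eq_iff add_zero_dim_l add_zero_dim_r uminus_zero_m
   fb_eq_iff fb_eq_zero_iff zero_eq_fb_iff fb_minus minus_zero_dim_r minus_zero_dim_l minus_self_m neg_add_self_m add_neg_self_m
  fb_mult_left fb_mult_right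



locale SF =
  fixes i :: int and Xo Xd Yo Yd f X' Y' b c ex ell ey a :: "int \<Rightarrow> 'a::ring_1 mat"
  assumes Xc: "is_complex (Xo, Xd)" and Yc: "is_complex (Yo, Yd)"
    and f: "chain_map (Xo, Xd) (Yo, Yd) f"
    and X'_obj: "\<forall>n<i. pobj (X' n)"
    and X_sum: "\<forall>n<i. Xo n = dsum (Yo n) (X' n)"
    and f_left: "\<forall>n<i. f n = rowb (Yo n) (0\<^sub>m (dim_row (Yo n)) (dim_row (X' n)))"
    and b_hom: "\<forall>n\<le>i-2. phom (Yo n) (X' (n+1)) (b n)"
    and ex_hom: "\<forall>n\<le>i-2. phom (X' n) (X' (n+1)) (ex n)"
    and d_left: "\<forall>n\<le>i-2. Xd n = blk (Yd n) (0\<^sub>m (dim_row (Yo (n+1))) (dim_row (X' n))) (b n) (ex n)"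
    and c_hom: "phom (Yo (i-1)) (Xo i) (c (i-1))"
    and ex_hom': "phom (X' (i-1)) (Xo i) (ex (i-1))"
    and d_im1: "Xd (i-1) = rowb (c (i-1)) (ex (i-1))"
    and Y'_obj: "\<forall>n>i. pobj (Y' n)"
    and Y_sum: "\<forall>n>i. Yo n = dsum (Xo n) (Y' n)"
    and f_right: "\<forall>n>i. f n = colb (Xo n) (0\<^sub>m (dim_row (Y' n)) (dim_row (Xo n)))"
    and ell_hom: "phom (Yo i) (Xo (i+1)) (ell i)"
    and ey_hom: "phom (Yo i) (Y' (i+1)) (ey i)"
    and d_i: "Yd i = colb (ell i) (ey i)"
    and a_hom: "\<forall>n\<ge>i+1. phom (Y' n) (Xo (n+1)) (a n)"
    and ey_hom': "\<forall>n\<ge>i+1. phom (Y' n) (Y' (n+1)) (ey n)"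
    and d_right: "\<forall>n\<ge>i+1. Yd n = blk (Xd n) (a n) (0\<^sub>m (dim_row (Y' (n+1))) (dim_row (Xo n))) (ey n)"
begin

lemma phomD: "phom A B \<phi> \<Longrightarrow> dim_row \<phi> = dim_row B \<and> dim_col \<phi> = dim_row A \<and> B * \<phi> = \<phi> \<and> \<phi> * A = \<phi>
   \<and> dim_col A = dim_row A \<and> dim_col B = dim_row B \<and> A * A = A \<and> B * B = B"
  unfolding phom_def pobj_def carrier_mat_def by auto

lemma Xd_hom: "phom (Xo n) (Xo (n+1)) (Xd n)" using Xc unfolding is_complex_def by auto
lemma Yd_hom: "phom (Yo n) (Yo (n+1)) (Yd n)" using Yc unfolding is_complex_def by auto
lemma f_hom: "phom (Xo n) (Yo n) (f n)" using f unfolding chain_map_def by auto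
lemma Xdd: "Xd (n+1) * Xd n = 0\<^sub>m (dim_row (Xo (n+2))) (dim_row (Xo n))" using Xc unfolding is_complex_def by auto
lemma Ydd: "Yd (n+1) * Yd n = 0\<^sub>m (dim_row (Yo (n+2))) (dim_row (Yo n))" using Yc unfolding is_complex_def by auto
lemma f_comm: "Yd n * f n = f (n+1) * Xd n" using f unfolding chain_map_def by auto

lemma dims[simp]:
  "dim_col (Xo n) = dim_row (Xo n)" "dim_col (Yo n) = dim_row (Yo n)"
  "dim_row (Xd n) = dim_row (Xo (n+1))" "dim_col (Xd n) = dim_row (Xo n)"
  "dim_row (Yd n) = dim_row (Yo (n+1))" "dim_col (Yd n) = dim_row (Yo n)"
  "dim_row (f n) = dim_row (Yo n)" "dim_col (f n) = dim_row (Xo n)"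
  "dim_row (c (i-1)) = dim_row (Xo i)" "dim_col (c (i-1)) = dim_row (Yo (i-1))"
  "dim_row (ex (i-1)) = dim_row (Xo i)" "dim_col (ex (i-1)) = dim_row (X' (i-1))"
  "dim_row (ell i) = dim_row (Xo (i+1))" "dim_col (ell i) = dim_row (Yo i)"
  "dim_row (ey i) = dim_row (Y' (i+1))" "dim_col (ey i) = dim_row (Yo i)"
  using phomD[OF Xd_hom[of n]] phomD[OF Yd_hom[of n]] phomD[OF f_hom[of n]] phomD[OF c_hom]
    phomD[OF ex_hom'] phomD[OF ell_hom] phomD[OF ey_hom] by auto

lemma dims_cond[simp]:
  "n < i \<Longrightarrow> dim_col (X' n) = dim_row (X' n)"
  "n < i \<Longrightarrow> dim_row (Xo n) = dim_row (Yo n) + dim_row (X' n)"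
  "n > i \<Longrightarrow> dim_col (Y' n) = dim_row (Y' n)"
  "n > i \<Longrightarrow> dim_row (Yo n) = dim_row (Xo n) + dim_row (Y' n)"
  "n \<le> i - 2 \<Longrightarrow> dim_row (b n) = dim_row (X' (n+1))"
  "n \<le> i - 2 \<Longrightarrow> dim_col (b n) = dim_row (Yo n)"
  "n \<le> i - 2 \<Longrightarrow> dim_row (ex n) = dim_row (X' (n+1))"
  "n \<le> i - 2 \<Longrightarrow> dim_col (ex n) = dim_row (X' n)"
  "n \<ge> i + 1 \<Longrightarrow> dim_row (a n) = dim_row (Xo (n+1))"
  "n \<ge> i + 1 \<Longrightarrow> dim_col (a n) = dim_row (Y' n)"
  "n \<ge> i + 1 \<Longrightarrow> dim_row (ey n) = dim_row (Y' (n+1))"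
  "n \<ge> i + 1 \<Longrightarrow> dim_col (ey n) = dim_row (Y' n)"
  subgoal using X'_obj unfolding pobj_def carrier_mat_def by auto
  subgoal using X_sum[rule_format, of n] unfolding dsum_def by simp
  subgoal using Y'_obj unfolding pobj_def carrier_mat_def by auto
  subgoal using Y_sum[rule_format, of n] unfolding dsum_def by simp
  subgoal using phomD[OF b_hom[rule_format, of n]] by auto
  subgoal using phomD[OF b_hom[rule_format, of n]] by auto
  subgoal using phomD[OF ex_hom[rule_format, of n]] by auto
  subgoal using phomD[OF ex_hom[rule_format, of n]] by auto
  subgoal using phomD[OF a_hom[rule_format, of n]] by auto
  subgoal using phomD[OF a_hom[rule_format, of n]] by auto
  subgoal using phomD[OF ey_hom'[rule_format, of n]] by auto
  subgoal using phomD[OF ey_hom'[rule_format, of n]] by auto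
  done

lemmas bs = blk_simps rowb_def colb_def blk_def dsum_def

lemma atomics[simp]: "atomic (Xo n)" "atomic (Yo n)" "atomic (Xd n)" "atomic (Yd n)" "atomic (f n)"
  "atomic (X' n)" "atomic (Y' n)" "atomic (b n)" "atomic (c n)" "atomic (ex n)" "atomic (ell n)"
  "atomic (ey n)" "atomic (a n)" by (simp_all add: atomic_def)

lemma ids[simp]:
  "m = n + 1 \<Longrightarrow> Xo m * Xd n = Xd n" "Xd n * Xo n = Xd n" "m = n + 1 \<Longrightarrow> Yo m * Yd n = Yd n" "Yd n * Yo n = Yd n"
  "Yo n * f n = f n" "f n * Xo n = f n" "Xo n * Xo n = Xo n" "Yo n * Yo n = Yo n"
  "Xo i * c (i-1) = c (i-1)" "c (i-1) * Yo (i-1) = c (i-1)" "Xo i * ex (i-1) = ex (i-1)" "ex (i-1) * X' (i-1) = ex (i-1)"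
  "Xo (i+1) * ell i = ell i" "ell i * Yo i = ell i" "Y' (i+1) * ey i = ey i" "ey i * Yo i = ey i"
  using phomD[OF Xd_hom[of n]] phomD[OF Yd_hom[of n]] phomD[OF f_hom[of n]] phomD[OF c_hom]
    phomD[OF ex_hom'] phomD[OF ell_hom] phomD[OF ey_hom] by auto

lemma ids_cond[simp]:
  "n < i \<Longrightarrow> X' n * X' n = X' n" "n > i \<Longrightarrow> Y' n * Y' n = Y' n"
  "n \<le> i - 2 \<Longrightarrow> m = n + 1 \<Longrightarrow> X' m * b n = b n" "n \<le> i - 2 \<Longrightarrow> b n * Yo n = b n"
  "n \<le> i - 2 \<Longrightarrow> m = n + 1 \<Longrightarrow> X' m * ex n = ex n" "n \<le> i - 2 \<Longrightarrow> ex n * X' n = ex n"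
  "n \<ge> i + 1 \<Longrightarrow> m = n + 1 \<Longrightarrow> Xo m * a n = a n" "n \<ge> i + 1 \<Longrightarrow> a n * Y' n = a n"
  "n \<ge> i + 1 \<Longrightarrow> m = n + 1 \<Longrightarrow> Y' m * ey n = ey n" "n \<ge> i + 1 \<Longrightarrow> ey n * Y' n = ey n"
  subgoal using X'_obj unfolding pobj_def by auto
  subgoal using Y'_obj unfolding pobj_def by auto
  subgoal using phomD[OF b_hom[rule_format, of n]] by auto
  subgoal using phomD[OF b_hom[rule_format, of n]] by auto
  subgoal using phomD[OF ex_hom[rule_format, of n]] by auto
  subgoal using phomD[OF ex_hom[rule_format, of n]] by auto
  subgoal using phomD[OF a_hom[rule_format, of n]] by auto
  subgoal using phomD[OF a_hom[rule_format, of n]] by auto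
  subgoal using phomD[OF ey_hom'[rule_format, of n]] by auto
  subgoal using phomD[OF ey_hom'[rule_format, of n]] by auto
  done

lemma unf:
  "n < i \<Longrightarrow> Xo n = dsum (Yo n) (X' n)"
  "n > i \<Longrightarrow> Yo n = dsum (Xo n) (Y' n)"
  "n < i \<Longrightarrow> f n = rowb (Yo n) (0\<^sub>m (dim_row (Yo n)) (dim_row (X' n)))"
  "n > i \<Longrightarrow> f n = colb (Xo n) (0\<^sub>m (dim_row (Y' n)) (dim_row (Xo n)))"
  "n \<le> i - 2 \<Longrightarrow> Xd n = blk (Yd n) (0\<^sub>m (dim_row (Yo (n+1))) (dim_row (X' n))) (b n) (ex n)"
  "Xd (i-1) = rowb (c (i-1)) (ex (i-1))"
  "Yd i = colb (ell i) (ey i)"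
  "n \<ge> i + 1 \<Longrightarrow> Yd n = blk (Xd n) (a n) (0\<^sub>m (dim_row (Y' (n+1))) (dim_row (Xo n))) (ey n)"
  using X_sum Y_sum f_left f_right d_left d_im1 d_i d_right by auto

lemma L1:
  assumes n: "n \<le> i - 3"
  shows "b (n+1) * Yd n + ex (n+1) * b n = 0\<^sub>m (dim_row (X' (n+2))) (dim_row (Yo n))"
    "ex (n+1) * ex n = 0\<^sub>m (dim_row (X' (n+2))) (dim_row (X' n))"
proof -
  have "Xd (n+1) * Xd n = 0\<^sub>m (dim_row (Xo (n+2))) (dim_row (Xo n))" by (rule Xdd)
  then show "b (n+1) * Yd n + ex (n+1) * b n = 0\<^sub>m (dim_row (X' (n+2))) (dim_row (Yo n))"
    "ex (n+1) * ex n = 0\<^sub>m (dim_row (X' (n+2))) (dim_row (X' n))"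
    using n unf(5)[of n] unf(5)[of "n+1"] by (simp_all add: bs)
qed

lemma L2:
  shows "c (i-1) * Yd (i-2) + ex (i-1) * b (i-2) = 0\<^sub>m (dim_row (Xo i)) (dim_row (Yo (i-2)))"
    "ex (i-1) * ex (i-2) = 0\<^sub>m (dim_row (Xo i)) (dim_row (X' (i-2)))"
proof -
  have "Xd (i-2+1) * Xd (i-2) = 0\<^sub>m (dim_row (Xo (i-2+2))) (dim_row (Xo (i-2)))" by (rule Xdd)
  then show "c (i-1) * Yd (i-2) + ex (i-1) * b (i-2) = 0\<^sub>m (dim_row (Xo i)) (dim_row (Yo (i-2)))"
    "ex (i-1) * ex (i-2) = 0\<^sub>m (dim_row (Xo i)) (dim_row (X' (i-2)))"
    using unf(5)[of "i-2"] unf(6) by (simp_all add: bs)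
qed

lemma L3: "f i * c (i-1) = Yd (i-1)" "f i * ex (i-1) = 0\<^sub>m (dim_row (Yo i)) (dim_row (X' (i-1)))"
proof -
  have "Yd (i-1) * f (i-1) = f (i-1+1) * Xd (i-1)" by (rule f_comm)
  then show "f i * c (i-1) = Yd (i-1)" "f i * ex (i-1) = 0\<^sub>m (dim_row (Yo i)) (dim_row (X' (i-1)))"
    using unf(3)[of "i-1"] unf(6) by (auto simp add: bs)
qed

lemma L4: "ell i * f i = Xd i" "ey i * f i = 0\<^sub>m (dim_row (Y' (i+1))) (dim_row (Xo i))"
proof -
  have "Yd i * f i = f (i+1) * Xd i" by (rule f_comm)
  then show "ell i * f i = Xd i" "ey i * f i = 0\<^sub>m (dim_row (Y' (i+1))) (dim_row (Xo i))"
    using unf(4)[of "i+1"] unf(7) by (auto simp add: bs)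
qed

lemma L5: "Xd (i+1) * ell i + a (i+1) * ey i = 0\<^sub>m (dim_row (Xo (i+2))) (dim_row (Yo i))"
  "ey (i+1) * ey i = 0\<^sub>m (dim_row (Y' (i+2))) (dim_row (Yo i))"
proof -
  have "Yd (i+1) * Yd i = 0\<^sub>m (dim_row (Yo (i+2))) (dim_row (Yo i))" by (rule Ydd)
  then show "Xd (i+1) * ell i + a (i+1) * ey i = 0\<^sub>m (dim_row (Xo (i+2))) (dim_row (Yo i))"
  "ey (i+1) * ey i = 0\<^sub>m (dim_row (Y' (i+2))) (dim_row (Yo i))"
    using unf(8)[of "i+1"] unf(7) by (auto simp add: bs)
qed

lemma L6: assumes n: "n \<ge> i + 1"
  shows "Xd (n+1) * a n + a (n+1) * ey n = 0\<^sub>m (dim_row (Xo (n+2))) (dim_row (Y' n))"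
  "ey (n+1) * ey n = 0\<^sub>m (dim_row (Y' (n+2))) (dim_row (Y' n))"
proof -
  have "Yd (n+1) * Yd n = 0\<^sub>m (dim_row (Yo (n+2))) (dim_row (Yo n))" by (rule Ydd)
  then show "Xd (n+1) * a n + a (n+1) * ey n = 0\<^sub>m (dim_row (Xo (n+2))) (dim_row (Y' n))"
  "ey (n+1) * ey n = 0\<^sub>m (dim_row (Y' (n+2))) (dim_row (Y' n))"
    using n unf(8)[of "n+1"] unf(8)[of n] by (auto simp add: bs)
qed

end


lemma phom_uminus: "phom A B (\<phi>::'a::ring_1 mat) \<Longrightarrow> phom A B (- \<phi>)"
  unfolding phom_def pobj_def carrier_mat_def by auto

declare uminus_zero_m[simp]

lemma phom_id: "pobj A \<Longrightarrow> phom A A A" unfolding phom_def pobj_def by auto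

lemma phomI: "pobj A \<Longrightarrow> pobj B \<Longrightarrow> dim_row \<phi> = dim_row B \<Longrightarrow> dim_col \<phi> = dim_row A \<Longrightarrow>
  B * \<phi> = \<phi> \<Longrightarrow> \<phi> * A = \<phi> \<Longrightarrow> phom A B \<phi>"
  unfolding phom_def carrier_mat_def by auto

lemma add_eq_zero_neg: "A + B = 0\<^sub>m r c \<Longrightarrow> dim_row A = r \<Longrightarrow> dim_col A = c \<Longrightarrow> dim_row B = r \<Longrightarrow> dim_col B = c \<Longrightarrow>
   A = - (B::'a::group_add mat)"
proof (rule eq_matI)
  fix p q assume e: "A + B = 0\<^sub>m r c" and d: "dim_row A = r" "dim_col A = c" "dim_row B = r" "dim_col B = c"
    and pq: "p < dim_row (- B)" "q < dim_col (- B)"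
  hence "(A + B) $$ (p,q) = 0" by simp
  hence "A $$ (p,q) + B $$ (p,q) = 0" using pq d by simp
  then show "A $$ (p,q) = (- B) $$ (p,q)" using pq by (simp add: eq_neg_iff_add_eq_0)
qed auto

lemma fb_degenerate[simp]: "dim_row B = dim_row A \<Longrightarrow> dim_col B = 0 \<Longrightarrow> dim_row C = 0 \<Longrightarrow> dim_col C = dim_col A \<Longrightarrow>
  dim_row D = 0 \<Longrightarrow> dim_col D = 0 \<Longrightarrow> four_block_mat A B C D = A"
  by (rule eq_matI) auto

lemma int_one_add_comm[simp]: "1 + (n::int) = n + 1" by simp
lemma int_num_add_comm[simp]: "numeral k + (n::int) = n + numeral k" by simp

context SF begin

definition "Zo = (\<lambda>n. if n < i - 1 then X' (n+1) else if n = i - 1 then Xo i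
                   else if n = i then Yo i else Y' n)"
definition "Zd = (\<lambda>n. if n \<le> i - 2 then - ex (n+1) else if n = i - 1 then f i else ey n)"
definition "g = (\<lambda>n. if n < i - 1 then b n else if n = i - 1 then c (i-1)
                  else if n = i then Yo i
                  else rowb (0\<^sub>m (dim_row (Y' n)) (dim_row (Xo n))) (Y' n))"
definition "w = (\<lambda>n. if n < i - 1 then colb (0\<^sub>m (dim_row (Yo (n+1))) (dim_row (X' (n+1)))) (X' (n+1))
                  else if n = i - 1 then Xo i
                  else if n = i then - ell i else - a n)"

lemma Z_hom: "phom (Zo n) (Zo (n+1)) (Zd n)"
proof -
  consider "n \<le> i - 3" | "n = i - 2" | "n = i - 1" | "n = i" | "n \<ge> i + 1" by linarith
  then show ?thesis
  proof cases
    case 1 then show ?thesis using ex_hom[rule_format, of "n+1"] by (simp add: Zo_def Zd_def phom_uminus)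
  next
    case 2 then show ?thesis using ex_hom' by (simp add: Zo_def Zd_def phom_uminus)
  next
    case 3 then show ?thesis using f_hom[of i] by (simp add: Zo_def Zd_def)
  next
    case 4 then show ?thesis using ey_hom by (simp add: Zo_def Zd_def)
  next
    case 5 then show ?thesis using ey_hom'[rule_format, of n] by (simp add: Zo_def Zd_def)
  qed
qed

lemma Z_dd: "Zd (n+1) * Zd n = 0\<^sub>m (dim_row (Zo (n+2))) (dim_row (Zo n))"
proof -
  consider "n \<le> i - 4" | "n = i - 3" | "n = i - 2" | "n = i - 1" | "n = i" | "n \<ge> i + 1" by linarith
  then show ?thesis
  proof cases
    case 1 then show ?thesis using L1(2)[of "n+1"] by (simp add: Zo_def Zd_def)
  next
    case 2 then show ?thesis using L2(2) by (simp add: Zo_def Zd_def)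
  next
    case 3 then show ?thesis using L3(2) by (simp add: Zo_def Zd_def)
  next
    case 4 then show ?thesis using L4(2) by (simp add: Zo_def Zd_def)
  next
    case 5 then show ?thesis using L5(2) by (simp add: Zo_def Zd_def)
  next
    case 6 then show ?thesis using L6(2)[of n] by (simp add: Zo_def Zd_def)
  qed
qed

lemma N1: "n \<le> i - 3 \<Longrightarrow> b (n+1) * Yd n = - (ex (n+1) * b n)"
  by (rule add_eq_zero_neg[OF L1(1)]) simp_all
lemma N2: "c (i-1) * Yd (i-2) = - (ex (i-1) * b (i-2))"
  by (rule add_eq_zero_neg[OF L2(1)]) simp_all
lemma N5: "Xd (i+1) * ell i = - (a (i+1) * ey i)"
  by (rule add_eq_zero_neg[OF L5(1)]) simp_all
lemma N6: "n \<ge> i + 1 \<Longrightarrow> Xd (n+1) * a n = - (a (n+1) * ey n)"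
  by (rule add_eq_zero_neg[OF L6(1)]) simp_all

lemma pobj_Xo: "pobj (Xo n)" using phomD[OF Xd_hom[of n]] unfolding pobj_def carrier_mat_def by auto
lemma pobj_Yo: "pobj (Yo n)" using phomD[OF Yd_hom[of n]] unfolding pobj_def carrier_mat_def by auto

lemma g_hom: "phom (Yo n) (Zo n) (g n)"
proof -
  consider "n < i - 1" | "n = i - 1" | "n = i" | "n > i" by linarith
  then show ?thesis
  proof cases
    case 1 then show ?thesis using b_hom[rule_format, of n] by (simp add: Zo_def g_def)
  next
    case 2 then show ?thesis using c_hom by (simp add: Zo_def g_def)
  next
    case 3 then show ?thesis using pobj_Yo[of i] by (simp add: Zo_def g_def phom_id)
  next
    case 4 then show ?thesis using pobj_Yo[of n] Y'_obj
      by (intro phomI) (auto simp add: Zo_def g_def unf bs)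
  qed
qed

lemma g_comm: "Zd n * g n = g (n+1) * Yd n"
proof -
  consider "n \<le> i - 3" | "n = i - 2" | "n = i - 1" | "n = i" | "n \<ge> i + 1" by linarith
  then show ?thesis
  proof cases
    case 1 then show ?thesis using N1[of n] by (simp add: Zd_def g_def)
  next
    case 2 then show ?thesis using N2 by (simp add: Zd_def g_def)
  next
    case 3 then show ?thesis using L3(1) by (simp add: Zd_def g_def)
  next
    case 4 then show ?thesis by (simp add: Zd_def g_def unf bs)
  next
    case 5 then show ?thesis by (simp add: Zd_def g_def unf bs)
  qed
qed

lemma w_hom: "phom (Zo n) (Xo (n+1)) (w n)"
proof -
  consider "n < i - 1" | "n = i - 1" | "n = i" | "n > i" by linarith
  then show ?thesis
  proof cases
    case 1 then show ?thesis using pobj_Xo[of "n+1"] X'_obj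
      by (intro phomI) (auto simp add: Zo_def w_def unf bs)
  next
    case 2 then show ?thesis using pobj_Xo[of i] by (simp add: Zo_def w_def phom_id)
  next
    case 3 then show ?thesis using ell_hom by (simp add: Zo_def w_def phom_uminus)
  next
    case 4 then show ?thesis using a_hom[rule_format, of n] by (simp add: Zo_def w_def phom_uminus)
  qed
qed

lemma w_comm: "- Xd (n+1) * w n = w (n+1) * Zd n"
proof -
  consider "n \<le> i - 3" | "n = i - 2" | "n = i - 1" | "n = i" | "n \<ge> i + 1" by linarith
  then show ?thesis
  proof cases
    case 1 then show ?thesis by (simp add: Zd_def w_def unf bs)
  next
    case 2 then show ?thesis by (simp add: Zd_def w_def unf bs)
  next
    case 3 then show ?thesis using L4(1) by (simp add: Zd_def w_def)
  next
    case 4 then show ?thesis using N5 by (simp add: Zd_def w_def)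
  next
    case 5 then show ?thesis using N6[of n] by (simp add: Zd_def w_def)
  qed
qed

lemma Z_complex: "is_complex (Zo, Zd)"
  unfolding is_complex_def using Z_hom Z_dd by simp

end


lemma regroup_row:
  fixes A B C D :: "'a::zero mat"
  assumes d: "dim_row B = dim_row A" "dim_row D = dim_row C" "dim_col C = dim_col A" "dim_col D = dim_col B"
    "r = dim_row A + dim_row C" "k = dim_col A + dim_col B" "c' = c"
  shows "four_block_mat (four_block_mat A B C D) (0\<^sub>m r c) (0\<^sub>m 0 k) (0\<^sub>m 0 c') =
    four_block_mat (four_block_mat A B (0\<^sub>m 0 (dim_col A)) (0\<^sub>m 0 (dim_col B))) (0\<^sub>m (dim_row A) c)
      (four_block_mat C D (0\<^sub>m 0 (dim_col C)) (0\<^sub>m 0 (dim_col D))) (0\<^sub>m (dim_row C) c)"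
    (is "?L = ?R")
proof (rule eq_matI)
  show "dim_row ?L = dim_row ?R" "dim_col ?L = dim_col ?R" using d by simp_all
  fix p q assume pq: "p < dim_row ?R" "q < dim_col ?R"
  have p: "p < dim_row A + dim_row C" and q: "q < dim_col A + dim_col B + c" using pq d by simp_all
  show "?L $$ (p,q) = ?R $$ (p,q)"
  proof (cases "q < dim_col A + dim_col B")
    case True
    show ?thesis
    proof (cases "p < dim_row A")
      case True then show ?thesis using \<open>q < dim_col A + dim_col B\<close> d by (cases "q < dim_col A") simp_all
    next
      case False
      hence pp: "p - dim_row A < dim_row C" using p by linarith
      then show ?thesis using False \<open>q < dim_col A + dim_col B\<close> p d by (cases "q < dim_col A") simp_all
    qed
  next
    case False
    show ?thesis
    proof (cases "p < dim_row A")
      case True then show ?thesis using False p q d by simp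
    next
      case F2: False
      hence pp: "p - dim_row A < dim_row C" using p by linarith
      then show ?thesis using False F2 p q d by simp
    qed
  qed
qed

lemma phomD': "phom A B \<phi> \<Longrightarrow> dim_row \<phi> = dim_row B \<and> dim_col \<phi> = dim_row A \<and> B * \<phi> = \<phi> \<and> \<phi> * A = \<phi>
   \<and> dim_col A = dim_row A \<and> dim_col B = dim_row B \<and> A * A = A \<and> B * B = B"
  unfolding phom_def pobj_def carrier_mat_def by auto

lemma pobjI: "dim_col A = dim_row A \<Longrightarrow> A * A = A \<Longrightarrow> pobj A"
  unfolding pobj_def carrier_mat_def by auto

lemma homotopic_eq:
  assumes A: "\<forall>n. phom (fst A n) (fst A (n+1)) (snd A n)" and B: "\<forall>n. phom (fst B n) (fst B (n+1)) (snd B n)"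
    and FG: "\<forall>n. F n = G n" and dF: "\<forall>n. dim_row (F n) = dim_row (fst B n) \<and> dim_col (F n) = dim_row (fst A n)"
  shows "homotopic A B F (G :: int \<Rightarrow> 'a::ring_1 mat)"
  unfolding homotopic_def
proof (intro exI[of _ "\<lambda>n. 0\<^sub>m (dim_row (fst B (n-1))) (dim_row (fst A n))"] conjI allI)
  fix n
  have pA: "pobj (fst A n)" "pobj (fst A (n+1))" using A unfolding phom_def by auto
  have pB: "pobj (fst B (n-1))" "pobj (fst B n)" using B[rule_format, of "n-1"] unfolding phom_def by auto
  show "phom (fst A n) (fst B (n - 1)) (0\<^sub>m (dim_row (fst B (n - 1))) (dim_row (fst A n)))"
    using pA pB unfolding phom_def pobj_def carrier_mat_def by auto
  have d1: "dim_row (snd B (n-1)) = dim_row (fst B n)" "dim_col (snd B (n-1)) = dim_row (fst B (n-1))"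
    using B[rule_format, of "n-1"] unfolding phom_def carrier_mat_def by auto
  have d2: "dim_row (snd A n) = dim_row (fst A (n+1))" "dim_col (snd A n) = dim_row (fst A n)"
    using A[rule_format, of n] unfolding phom_def carrier_mat_def by auto
  show "F n - G n = snd B (n - 1) * 0\<^sub>m (dim_row (fst B (n - 1))) (dim_row (fst A n)) +
        0\<^sub>m (dim_row (fst B (n + 1 - 1))) (dim_row (fst A (n + 1))) * snd A n"
    using FG dF d1 d2 by (simp add: minus_self_m)
qed

lemma K_iso_id:
  assumes A: "\<forall>n. phom (fst A n) (fst A (n+1)) (snd A n)"
  shows "K_iso A A (fst (A :: 'a::ring_1 cplx))"
proof -
  have c: "chain_map A A (fst A)"
    unfolding chain_map_def using A unfolding phom_def pobj_def by auto
  have h: "homotopic A A (comp_map (fst A) (fst A)) (id_map A)"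
  proof (rule homotopic_eq[OF A A])
    show "\<forall>n. comp_map (fst A) (fst A) n = id_map A n"
    proof
      fix n show "comp_map (fst A) (fst A) n = id_map A n"
        using phomD'[OF A[rule_format, of n]] unfolding comp_map_def id_map_def by simp
    qed
    show "\<forall>n. dim_row (comp_map (fst A) (fst A) n) = dim_row (fst A n) \<and> dim_col (comp_map (fst A) (fst A) n) = dim_row (fst A n)"
    proof
      fix n show "dim_row (comp_map (fst A) (fst A) n) = dim_row (fst A n) \<and> dim_col (comp_map (fst A) (fst A) n) = dim_row (fst A n)"
        using phomD'[OF A[rule_format, of n]] unfolding comp_map_def by simp
    qed
  qed
  show ?thesis unfolding K_iso_def using c h by blast
qed

context SF begin

definition "Cn = cone (Xo,Xd) (Yo,Yd) f"

lemma Cn_simps[simp]: "fst Cn n = dsum (Xo (n+1)) (Yo n)"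
  "snd Cn n = blk (- Xd (n+1)) (0\<^sub>m (dim_row (Xo (n+2))) (dim_row (Yo n))) (f (n+1)) (Yd n)"
  unfolding Cn_def cone_def by simp_all

lemma pobj_Xo': "pobj (Xo n)" using phomD[OF Xd_hom[of n]] unfolding pobj_def carrier_mat_def by auto

lemma Cn_obj: "pobj (fst Cn n)"
  by (rule pobjI) (simp_all add: bs)

lemma Cn_hom: "phom (fst Cn n) (fst Cn (n+1)) (snd Cn n)"
  by (rule phomI[OF Cn_obj Cn_obj]) (simp_all add: bs)

definition "gam = (\<lambda>n. if n < i - 1 then rowb (rowb (0\<^sub>m (dim_row (X' (n+1))) (dim_row (Yo (n+1)))) (X' (n+1))) (b n)
  else if n = i - 1 then rowb (Xo i) (c (i-1))
  else if n = i then rowb (0\<^sub>m (dim_row (Yo i)) (dim_row (Xo (i+1)))) (Yo i)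
  else rowb (0\<^sub>m (dim_row (Y' n)) (dim_row (Xo (n+1)))) (rowb (0\<^sub>m (dim_row (Y' n)) (dim_row (Xo n))) (Y' n)))"

definition "del = (\<lambda>n. if n < i - 1 then colb (colb (0\<^sub>m (dim_row (Yo (n+1))) (dim_row (X' (n+1)))) (X' (n+1))) (0\<^sub>m (dim_row (Yo n)) (dim_row (X' (n+1))))
  else if n = i - 1 then colb (Xo i) (0\<^sub>m (dim_row (Yo (i-1))) (dim_row (Xo i)))
  else if n = i then colb (- ell i) (Yo i)
  else colb (- a n) (colb (0\<^sub>m (dim_row (Xo n)) (dim_row (Y' n))) (Y' n)))"

lemma gam_hom: "phom (fst Cn n) (Zo n) (gam n)"
proof -
  consider "n < i - 1" | "n = i - 1" | "n = i" | "n > i" by linarith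
  then show ?thesis
  proof cases
    case 1 then show ?thesis using X'_obj
      by (intro phomI[OF Cn_obj]) (auto simp add: Zo_def gam_def unf bs)
  next
    case 2 then show ?thesis using pobj_Xo[of i]
      by (intro phomI[OF Cn_obj]) (auto simp add: Zo_def gam_def unf bs)
  next
    case 3 then show ?thesis using pobj_Yo[of i]
      by (intro phomI[OF Cn_obj]) (auto simp add: Zo_def gam_def unf bs)
  next
    case 4 then show ?thesis using Y'_obj
      by (intro phomI[OF Cn_obj]) (auto simp add: Zo_def gam_def unf bs)
  qed
qed

lemma gam_comm: "Zd n * gam n = gam (n+1) * snd Cn n"
proof -
  consider "n \<le> i - 3" | "n = i - 2" | "n = i - 1" | "n = i" | "n \<ge> i + 1" by linarith
  then show ?thesis
  proof cases
    case 1 then show ?thesis using N1[of n] by (simp add: Zd_def gam_def unf bs)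
  next
    case 2 then show ?thesis using N2 by (simp add: Zd_def gam_def unf bs)
  next
    case 3 then show ?thesis using L3(1) by (simp add: Zd_def gam_def unf bs)
  next
    case 4 then show ?thesis by (simp add: Zd_def gam_def unf bs)
  next
    case 5 then show ?thesis by (simp add: Zd_def gam_def unf bs)
  qed
qed


lemma del_hom: "phom (Zo n) (fst Cn n) (del n)"
proof -
  consider "n < i - 1" | "n = i - 1" | "n = i" | "n > i" by linarith
  then show ?thesis
  proof cases
    case 1 then show ?thesis using X'_obj
      by (intro phomI[OF _ Cn_obj]) (auto simp add: Zo_def del_def unf bs)
  next
    case 2 then show ?thesis using pobj_Xo[of i]
      by (intro phomI[OF _ Cn_obj]) (auto simp add: Zo_def del_def unf bs)
  next
    case 3 then show ?thesis using pobj_Yo[of i]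
      by (intro phomI[OF _ Cn_obj]) (auto simp add: Zo_def del_def unf bs)
  next
    case 4 then show ?thesis using Y'_obj
      by (intro phomI[OF _ Cn_obj]) (auto simp add: Zo_def del_def unf bs)
  qed
qed

lemma del_comm: "snd Cn n * del n = del (n+1) * Zd n"
proof -
  consider "n \<le> i - 3" | "n = i - 2" | "n = i - 1" | "n = i" | "n \<ge> i + 1" by linarith
  then show ?thesis
  proof cases
    case 1 then show ?thesis by (simp add: Zd_def del_def unf bs)
  next
    case 2 then show ?thesis by (simp add: Zd_def del_def unf bs)
  next
    case 3 then show ?thesis using L4(1) by (simp add: Zd_def del_def unf bs)
  next
    case 4 then show ?thesis using N5 by (simp add: Zd_def del_def unf bs)
  next
    case 5 then show ?thesis using N6[of n] by (simp add: Zd_def del_def unf bs)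
  qed
qed

lemma gam_del: "gam n * del n = Zo n"
proof -
  consider "n < i - 1" | "n = i - 1" | "n = i" | "n > i" by linarith
  then show ?thesis
  proof cases
    case 1 then show ?thesis by (simp add: Zo_def gam_def del_def unf bs)
  next
    case 2 then show ?thesis by (simp add: Zo_def gam_def del_def unf bs)
  next
    case 3 then show ?thesis by (simp add: Zo_def gam_def del_def unf bs)
  next
    case 4 then show ?thesis by (simp add: Zo_def gam_def del_def unf bs)
  qed
qed

lemma cin_eq: "cone_in (Xo,Xd) (Yo,Yd) n = colb (0\<^sub>m (dim_row (Xo (n+1))) (dim_row (Yo n))) (Yo n)"
  unfolding cone_in_def by simp
lemma cpr_eq: "cone_pr (Xo,Xd) (Yo,Yd) n = rowb (Xo (n+1)) (0\<^sub>m (dim_row (Xo (n+1))) (dim_row (Yo n)))"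
  unfolding cone_pr_def by simp

lemma gam_cin: "gam n * cone_in (Xo,Xd) (Yo,Yd) n = g n * Yo n"
proof -
  consider "n < i - 1" | "n = i - 1" | "n = i" | "n > i" by linarith
  then show ?thesis
  proof cases
    case 1 then show ?thesis by (simp add: cin_eq g_def gam_def unf bs)
  next
    case 2 then show ?thesis by (simp add: cin_eq g_def gam_def unf bs)
  next
    case 3 then show ?thesis by (simp add: cin_eq g_def gam_def unf bs)
  next
    case 4 then show ?thesis by (simp add: cin_eq g_def gam_def unf bs)
  qed
qed


definition "sh = (\<lambda>n. if n < i then blk (0\<^sub>m (dim_row (Xo n)) (dim_row (Xo (n+1))))
       (colb (- Yo n) (0\<^sub>m (dim_row (X' n)) (dim_row (Yo n))))
       (0\<^sub>m (dim_row (Yo (n-1))) (dim_row (Xo (n+1)))) (0\<^sub>m (dim_row (Yo (n-1))) (dim_row (Yo n)))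
  else if n = i then 0\<^sub>m (dim_row (Xo i) + dim_row (Yo (i-1))) (dim_row (Xo (i+1)) + dim_row (Yo i))
  else blk (0\<^sub>m (dim_row (Xo n)) (dim_row (Xo (n+1))))
       (rowb (- Xo n) (0\<^sub>m (dim_row (Xo n)) (dim_row (Y' n))))
       (0\<^sub>m (dim_row (Yo (n-1))) (dim_row (Xo (n+1)))) (0\<^sub>m (dim_row (Yo (n-1))) (dim_row (Yo n))))"

definition "hh = (\<lambda>n. if n < i then blk (0\<^sub>m (dim_row (Yo n)) (dim_row (Xo (n+1)))) (Yo n)
       (0\<^sub>m (dim_row (X' n)) (dim_row (Xo (n+1)))) (0\<^sub>m (dim_row (X' n)) (dim_row (Yo n)))
  else if n = i then 0\<^sub>m (dim_row (Xo i)) (dim_row (Xo (i+1)) + dim_row (Yo i))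
  else rowb (0\<^sub>m (dim_row (Xo n)) (dim_row (Xo (n+1)))) (rowb (Xo n) (0\<^sub>m (dim_row (Xo n)) (dim_row (Y' n)))))"

lemma sh_hom: "phom (fst Cn n) (fst Cn (n-1)) (sh n)"
proof -
  consider "n < i" | "n = i" | "n > i" by linarith
  then show ?thesis
  proof cases
    case 1 then show ?thesis by (intro phomI[OF Cn_obj Cn_obj]) (auto simp add: sh_def unf bs)
  next
    case 2 then show ?thesis by (intro phomI[OF Cn_obj Cn_obj]) (auto simp add: sh_def unf bs)
  next
    case 3 then show ?thesis by (intro phomI[OF Cn_obj Cn_obj]) (auto simp add: sh_def unf bs)
  qed
qed

lemma sh_eq: "del n * gam n - fst Cn n = snd Cn (n-1) * sh n + sh (n+1) * snd Cn n"
proof -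
  consider "n \<le> i - 2" | "n = i - 1" | "n = i" | "n \<ge> i + 1" by linarith
  then show ?thesis
  proof cases
    case 1 then show ?thesis by (simp add: sh_def del_def gam_def unf bs)
  next
    case 2 then show ?thesis by (simp add: sh_def del_def gam_def unf bs)
  next
    case 3 then show ?thesis by (simp add: sh_def del_def gam_def unf bs)
  next
    case 4 then show ?thesis by (simp add: sh_def del_def gam_def unf bs)
  qed
qed

lemma hh_hom: "phom (fst Cn n) (Xo n) (hh n)"
proof -
  consider "n < i" | "n = i" | "n > i" by linarith
  then show ?thesis
  proof cases
    case 1 then show ?thesis using pobj_Xo[of n] by (intro phomI[OF Cn_obj]) (auto simp add: hh_def unf bs)
  next
    case 2 then show ?thesis using pobj_Xo[of n] by (intro phomI[OF Cn_obj]) (auto simp add: hh_def unf bs)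
  next
    case 3 then show ?thesis using pobj_Xo[of n] by (intro phomI[OF Cn_obj]) (auto simp add: hh_def unf bs)
  qed
qed

lemma Xo_cpr: "Xo (n+1) * cone_pr (Xo,Xd) (Yo,Yd) n = rowb (Xo (n+1)) (0\<^sub>m (dim_row (Xo (n+1))) (dim_row (Yo n)))"
  unfolding cpr_eq by (simp add: bs)

lemma hh_eq: "Xo (n+1) * cone_pr (Xo,Xd) (Yo,Yd) n - w n * gam n = - Xd n * hh n + hh (n+1) * snd Cn n"
proof -
  consider "n \<le> i - 2" | "n = i - 1" | "n = i" | "n \<ge> i + 1" by linarith
  then show ?thesis
  proof cases
    case 1
    have F: "rowb (Xo (n+1)) (0\<^sub>m (dim_row (Xo (n+1))) (dim_row (Yo n))) =
      blk (rowb (Yo (n+1)) (0\<^sub>m (dim_row (Yo (n+1))) (dim_row (X' (n+1))))) (0\<^sub>m (dim_row (Yo (n+1))) (dim_row (Yo n)))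
          (rowb (0\<^sub>m (dim_row (X' (n+1))) (dim_row (Yo (n+1)))) (X' (n+1))) (0\<^sub>m (dim_row (X' (n+1))) (dim_row (Yo n)))"
    proof -
      have X: "Xo (n+1) = dsum (Yo (n+1)) (X' (n+1))" by (rule unf(1)) (use 1 in simp)
      show ?thesis unfolding X rowb_def blk_def dsum_def
        by (subst regroup_row) (use 1 in simp_all)
    qed
    show ?thesis unfolding Xo_cpr F using 1 by (simp add: hh_def w_def gam_def unf bs)
  next
    case 2 then show ?thesis unfolding Xo_cpr by (simp add: hh_def w_def gam_def unf bs)
  next
    case 3 then show ?thesis unfolding Xo_cpr by (simp add: hh_def w_def gam_def unf bs)
  next
    case 4 then show ?thesis unfolding Xo_cpr by (simp add: hh_def w_def gam_def unf bs)
  qed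
qed


lemma main: "is_complex (Zo, Zd) \<and> chain_map (Yo, Yd) (Zo, Zd) g \<and>
        chain_map (Zo, Zd) (shift (Xo, Xd)) w \<and>
        tri_iso (Xo, Xd) (Yo, Yd) (cone (Xo, Xd) (Yo, Yd) f) f (cone_in (Xo, Xd) (Yo, Yd))
                (cone_pr (Xo, Xd) (Yo, Yd))
                (Xo, Xd) (Yo, Yd) (Zo, Zd) f g w"
proof (intro conjI)
  show "is_complex (Zo, Zd)" by (rule Z_complex)
  show cg: "chain_map (Yo, Yd) (Zo, Zd) g" unfolding chain_map_def using g_hom g_comm by simp
  show "chain_map (Zo, Zd) (shift (Xo, Xd)) w" unfolding chain_map_def shift_def using w_hom w_comm by simp
  have preX: "\<forall>n. phom (fst (Xo,Xd) n) (fst (Xo,Xd) (n+1)) (snd (Xo,Xd) n)" using Xd_hom by simp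
  have preY: "\<forall>n. phom (fst (Yo,Yd) n) (fst (Yo,Yd) (n+1)) (snd (Yo,Yd) n)" using Yd_hom by simp
  have preZ: "\<forall>n. phom (fst (Zo,Zd) n) (fst (Zo,Zd) (n+1)) (snd (Zo,Zd) n)" using Z_hom by simp
  have KX: "K_iso (Xo,Xd) (Xo,Xd) Xo" using K_iso_id[OF preX] by simp
  have KY: "K_iso (Yo,Yd) (Yo,Yd) Yo" using K_iso_id[OF preY] by simp
  have cgam: "chain_map Cn (Zo,Zd) gam" unfolding chain_map_def using gam_hom gam_comm by simp
  have cdel: "chain_map (Zo,Zd) Cn del" unfolding chain_map_def using del_hom del_comm by simp
  have h1: "homotopic Cn Cn (comp_map del gam) (id_map Cn)"
    unfolding homotopic_def comp_map_def id_map_def using sh_hom sh_eq by blast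
  have h2: "homotopic (Zo,Zd) (Zo,Zd) (comp_map gam del) (id_map (Zo,Zd))"
  proof (rule homotopic_eq[OF preZ preZ])
    show "\<forall>n. comp_map gam del n = id_map (Zo, Zd) n" unfolding comp_map_def id_map_def using gam_del by simp
    show "\<forall>n. dim_row (comp_map gam del n) = dim_row (fst (Zo, Zd) n) \<and> dim_col (comp_map gam del n) = dim_row (fst (Zo, Zd) n)"
    proof
      fix n show "dim_row (comp_map gam del n) = dim_row (fst (Zo, Zd) n) \<and> dim_col (comp_map gam del n) = dim_row (fst (Zo, Zd) n)"
        using phomD'[OF Z_hom[of n]] gam_del[of n] unfolding comp_map_def by simp
    qed
  qed
  have KC: "K_iso Cn (Zo,Zd) gam" unfolding K_iso_def using cgam cdel h1 h2 by blast
  have h3: "homotopic (Xo,Xd) (Yo,Yd) (comp_map Yo f) (comp_map f Xo)"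
  proof (rule homotopic_eq[OF preX preY])
    show "\<forall>n. comp_map Yo f n = comp_map f Xo n" unfolding comp_map_def by simp
    show "\<forall>n. dim_row (comp_map Yo f n) = dim_row (fst (Yo, Yd) n) \<and> dim_col (comp_map Yo f n) = dim_row (fst (Xo, Xd) n)"
      unfolding comp_map_def by simp
  qed
  have h4: "homotopic (Yo,Yd) (Zo,Zd) (comp_map gam (cone_in (Xo, Xd) (Yo, Yd))) (comp_map g Yo)"
  proof (rule homotopic_eq[OF preY preZ])
    show "\<forall>n. comp_map gam (cone_in (Xo, Xd) (Yo, Yd)) n = comp_map g Yo n" unfolding comp_map_def using gam_cin by simp
    show "\<forall>n. dim_row (comp_map gam (cone_in (Xo, Xd) (Yo, Yd)) n) = dim_row (fst (Zo, Zd) n) \<and>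
        dim_col (comp_map gam (cone_in (Xo, Xd) (Yo, Yd)) n) = dim_row (fst (Yo, Yd) n)"
    proof
      fix n show "dim_row (comp_map gam (cone_in (Xo, Xd) (Yo, Yd)) n) = dim_row (fst (Zo, Zd) n) \<and>
        dim_col (comp_map gam (cone_in (Xo, Xd) (Yo, Yd)) n) = dim_row (fst (Yo, Yd) n)"
        using phomD'[OF g_hom[of n]] gam_cin[of n] unfolding comp_map_def by simp
    qed
  qed
  have h5: "homotopic Cn (shift (Xo,Xd)) (comp_map (shift_map Xo) (cone_pr (Xo, Xd) (Yo, Yd))) (comp_map w gam)"
    unfolding homotopic_def comp_map_def shift_map_def shift_def
    using hh_hom hh_eq by (intro exI[of _ hh]) simp
  show "tri_iso (Xo, Xd) (Yo, Yd) (cone (Xo, Xd) (Yo, Yd) f) f (cone_in (Xo, Xd) (Yo, Yd))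
                (cone_pr (Xo, Xd) (Yo, Yd)) (Xo, Xd) (Yo, Yd) (Zo, Zd) f g w"
    unfolding tri_iso_def Cn_def[symmetric]
    using KX KY KC h3 h4 h5 by blast
qed

end

theorem proposition3:
  fixes scale :: "'k::field \<Rightarrow> 'a::ring_1 \<Rightarrow> 'a"
    and J :: "int set" and i :: int
    and Xo Xd Yo Yd f :: "int \<Rightarrow> 'a mat"
    and X' Y' b c ex ell ey a :: "int \<Rightarrow> 'a mat"
  assumes alg: "fd_algebra scale"
    and nss: "\<not> semisimple_ring TYPE('a)"
    and J: "is_interval J"
    and X: "in_CJ J (Xo, Xd)" and Y: "in_CJ J (Yo, Yd)"
    and f: "chain_map (Xo, Xd) (Yo, Yd) f"
    and sirr: "sirreducible (Xo, Xd) (Yo, Yd) f"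
    and irr: "irreducible_mor (Xo i) (Yo i) (f i)"
    \<comment> \<open>standard form, left part\<close>
    and X'_obj: "\<forall>n<i. pobj (X' n)"
    and X_sum: "\<forall>n<i. Xo n = dsum (Yo n) (X' n)"
    and f_left: "\<forall>n<i. f n = rowb (Yo n) (0\<^sub>m (dim_row (Yo n)) (dim_row (X' n)))"
    and b_hom: "\<forall>n\<le>i-2. phom (Yo n) (X' (n+1)) (b n)"
    and ex_hom: "\<forall>n\<le>i-2. phom (X' n) (X' (n+1)) (ex n)"
    and d_left: "\<forall>n\<le>i-2. Xd n = blk (Yd n) (0\<^sub>m (dim_row (Yo (n+1))) (dim_row (X' n))) (b n) (ex n)"
    and c_hom: "phom (Yo (i-1)) (Xo i) (c (i-1))"
    and ex_hom': "phom (X' (i-1)) (Xo i) (ex (i-1))"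
    and d_im1: "Xd (i-1) = rowb (c (i-1)) (ex (i-1))"
    \<comment> \<open>standard form, right part\<close>
    and Y'_obj: "\<forall>n>i. pobj (Y' n)"
    and Y_sum: "\<forall>n>i. Yo n = dsum (Xo n) (Y' n)"
    and f_right: "\<forall>n>i. f n = colb (Xo n) (0\<^sub>m (dim_row (Y' n)) (dim_row (Xo n)))"
    and ell_hom: "phom (Yo i) (Xo (i+1)) (ell i)"
    and ey_hom: "phom (Yo i) (Y' (i+1)) (ey i)"
    and d_i: "Yd i = colb (ell i) (ey i)"
    and a_hom: "\<forall>n\<ge>i+1. phom (Y' n) (Xo (n+1)) (a n)"
    and ey_hom': "\<forall>n\<ge>i+1. phom (Y' n) (Y' (n+1)) (ey n)"
    and d_right: "\<forall>n\<ge>i+1. Yd n = blk (Xd n) (a n) (0\<^sub>m (dim_row (Y' (n+1))) (dim_row (Xo n))) (ey n)"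
  shows
    "let Zo = (\<lambda>n. if n < i - 1 then X' (n+1) else if n = i - 1 then Xo i
                   else if n = i then Yo i else Y' n);
         Zd = (\<lambda>n. if n \<le> i - 2 then - ex (n+1) else if n = i - 1 then f i else ey n);
         g = (\<lambda>n. if n < i - 1 then b n else if n = i - 1 then c (i-1)
                  else if n = i then Yo i
                  else rowb (0\<^sub>m (dim_row (Y' n)) (dim_row (Xo n))) (Y' n));
         w = (\<lambda>n. if n < i - 1 then colb (0\<^sub>m (dim_row (Yo (n+1))) (dim_row (X' (n+1)))) (X' (n+1))
                  else if n = i - 1 then Xo i
                  else if n = i then - ell i else - a n)
     in is_complex (Zo, Zd) \<and> chain_map (Yo, Yd) (Zo, Zd) g \<and>
        chain_map (Zo, Zd) (shift (Xo, Xd)) w \<and>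
        tri_iso (Xo, Xd) (Yo, Yd) (cone (Xo, Xd) (Yo, Yd) f) f (cone_in (Xo, Xd) (Yo, Yd))
                (cone_pr (Xo, Xd) (Yo, Yd))
                (Xo, Xd) (Yo, Yd) (Zo, Zd) f g w"
  proof -
  interpret SF i Xo Xd Yo Yd f X' Y' b c ex ell ey a
  proof (unfold_locales)
    show "is_complex (Xo, Xd)" using X unfolding in_CJ_def by simp
    show "is_complex (Yo, Yd)" using Y unfolding in_CJ_def by simp
  qed (use f X'_obj X_sum f_left b_hom ex_hom d_left c_hom ex_hom' d_im1 Y'_obj Y_sum f_right
        ell_hom ey_hom d_i a_hom ey_hom' d_right in simp_all)
  show ?thesis using main by (simp only: Let_def Zo_def Zd_def g_def w_def)
qed

end
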